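(* Assume $F$ is $\beta$-smooth and $T\ge2$. Run the framework with $\eta\le\frac{1}{\beta T}$. Then for any iteration $t\ge1$ of round $r\ge1$ and any client $i$, $$\|x^{(i)}_{r+1,t}-x_r\|^2\le2\eta^2T\sum_{\tau=1}^tS^{t-\tau}\,\Xi^{(i)}_{r+1,\tau}+22\eta^2T^2\|\nabla F(x_r)\|^2,$$ where $S=\frac{(T+1)^2}{T(T-1)}$ and $\Xi^{(i)}_{r,t}=\|\widehat g^{(i)}_{r,t-1}-\nabla F(x^{(i)}_{r,t-1})\|^2$.
   Context: **Objective.** $F=\frac1N\sum_{i=1}^Nf_i$ is the global objective of $N$ clients. **Framework.** For each round $r$: - each client sets $x^{(i)}_{r,0}=x_{r-1}$ and for $t=1,\dots,T$ updates $x^{(i)}_{r,t}=x^{(i)}_{r,t-1}-\eta\widehat g^{(i)}_{r,t-1}$, where $\widehat g^{(i)}_{r,t-1}$ is an arbitrary gradient estimate; - the server sets $x_r=\frac1N\sum_ix^{(i)}_{r,T}$. *)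

theory Defs
  imports "HOL-Analysis.Analysis"
begin

definition smooth_with_grad :: "real \<Rightarrow> ('a::euclidean_space \<Rightarrow> real) \<Rightarrow> ('a \<Rightarrow> 'a) \<Rightarrow> bool" where
  "smooth_with_grad \<beta> F gradF \<longleftrightarrow>
     (\<forall>x. (F has_derivative (\<lambda>h. gradF x \<bullet> h)) (at x)) \<and>
     (\<forall>x y. norm (gradF x - gradF y) \<le> \<beta> * norm (x - y))"

text \<open>The local-update framework: xs r = server iterate x_r, xc i r t = client iterate x^(i)_{r,t},
  g i r t = gradient estimate ghat^(i)_{r,t}. Clients are indexed by i < N, rounds r >= 1.\<close>
definition local_framework ::
  "nat \<Rightarrow> nat \<Rightarrow> real \<Rightarrow> (nat \<Rightarrow> 'a::real_vector) \<Rightarrow> (nat \<Rightarrow> nat \<Rightarrow> nat \<Rightarrow> 'a) \<Rightarrow> (nat \<Rightarrow> nat \<Rightarrow> nat \<Rightarrow> 'a) \<Rightarrow> bool" where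
  "local_framework N T \<eta> xs xc g \<longleftrightarrow>
     (\<forall>r\<ge>1. \<forall>i<N. xc i r 0 = xs (r - 1)) \<and>
     (\<forall>r\<ge>1. \<forall>i<N. \<forall>t\<in>{1..T}. xc i r t = xc i r (t - 1) - \<eta> *\<^sub>R g i r (t - 1)) \<and>
     (\<forall>r\<ge>1. xs r = (1 / real N) *\<^sub>R (\<Sum>i<N. xc i r T))"

end

theory Submission
  imports Defs
begin

lemma sq_split:
  fixes p q c :: real assumes "c > 0"
  shows "(p + q)\<^sup>2 \<le> (1 + 1/c) * p\<^sup>2 + (1 + c) * q\<^sup>2"
proof -
  have "0 \<le> (p - c*q)\<^sup>2 / c" using assms by simp
  also have "(p - c*q)\<^sup>2 / c = p\<^sup>2/c - 2*p*q + c*q\<^sup>2" using assms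
    by (simp add: field_simps power2_eq_square)
  finally show ?thesis by (simp add: algebra_simps power2_eq_square)
qed

lemma step_bound:
  fixes A B \<xi> \<gamma> \<eta> T :: real
  assumes "T \<ge> 2" "0 \<le> A" "0 \<le> B" "B \<le> (1 + 1/T) * A + \<eta> * (\<xi> + \<gamma>)"
  shows "B\<^sup>2 \<le> ((T + 1)\<^sup>2 / (T * (T - 1))) * A\<^sup>2 + 2 * T * \<eta>\<^sup>2 * (\<xi>\<^sup>2 + \<gamma>\<^sup>2)"
proof -
  have "B\<^sup>2 \<le> ((1 + 1/T) * A + \<eta> * (\<xi> + \<gamma>))\<^sup>2"
    using assms by (intro power_mono) auto
  also have "\<dots> \<le> (1 + 1/(T-1)) * ((1 + 1/T) * A)\<^sup>2 + (1 + (T-1)) * (\<eta> * (\<xi> + \<gamma>))\<^sup>2"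
    using assms by (intro sq_split) auto
  also have "(1 + 1/(T-1)) * ((1 + 1/T) * A)\<^sup>2 = ((T + 1)\<^sup>2 / (T * (T - 1))) * A\<^sup>2"
    using assms by (simp add: field_simps power2_eq_square)
  also have "(1 + (T-1)) * (\<eta> * (\<xi> + \<gamma>))\<^sup>2 = T * \<eta>\<^sup>2 * (\<xi> + \<gamma>)\<^sup>2"
    by (simp add: power_mult_distrib)
  also have "\<dots> \<le> T * \<eta>\<^sup>2 * (2 * (\<xi>\<^sup>2 + \<gamma>\<^sup>2))"
  proof -
    have "(\<xi> + \<gamma>)\<^sup>2 \<le> 2 * (\<xi>\<^sup>2 + \<gamma>\<^sup>2)" 
    proof -
      have "(\<xi> + \<gamma>)\<^sup>2 = 2 * (\<xi>\<^sup>2 + \<gamma>\<^sup>2) - (\<xi> - \<gamma>)\<^sup>2"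
        by (simp add: power2_eq_square algebra_simps)
      moreover have "0 \<le> (\<xi> - \<gamma>)\<^sup>2" by simp
      ultimately show ?thesis by linarith
    qed
    then show ?thesis using assms by (intro mult_left_mono) auto
  qed
  finally show ?thesis by (simp add: algebra_simps)
qed

lemma ST_bound:
  fixes T :: nat assumes "T \<ge> 2"
  shows "((real T + 1)\<^sup>2 / (real T * (real T - 1))) ^ T \<le> 34"
proof (cases "T = 2")
  case True then show ?thesis by (simp add: power2_eq_square)
next
  case False
  then have T3: "real T \<ge> 3" using assms by simp
  have S: "(real T + 1)\<^sup>2 / (real T * (real T - 1)) = (1 + 1/real T)\<^sup>2 * (1 + 1/(real T - 1))"
    using T3 by (simp add: field_simps power2_eq_square)
  have "(1 + 1/real T)\<^sup>2 * (1 + 1/(real T - 1)) \<le> (exp (1/real T))\<^sup>2 * exp (1/(real T - 1))"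
    using T3 by (intro mult_mono power_mono exp_ge_add_one_self) auto
  also have "\<dots> = exp (2/real T + 1/(real T - 1))"
    by (simp add: power2_eq_square exp_add[symmetric])
  finally have "((real T + 1)\<^sup>2 / (real T * (real T - 1))) ^ T \<le> exp (2/real T + 1/(real T - 1)) ^ T"
    unfolding S using T3 by (intro power_mono) auto
  also have "\<dots> = exp (real T * (2/real T + 1/(real T - 1)))"
    by (rule exp_of_nat_mult[symmetric])
  also have "real T * (2/real T + 1/(real T - 1)) = 2 + real T / (real T - 1)"
    using T3 by (simp add: field_simps)
  also have "\<dots> \<le> 7/2" using T3 by (simp add: field_simps)
  finally have a: "((real T + 1)\<^sup>2 / (real T * (real T - 1))) ^ T \<le> exp (7/2)" by simp
  have "exp (7/2::real) ^ 2 = exp (of_nat 2 * (7/2))"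
    by (rule exp_of_nat_mult[symmetric])
  also have "\<dots> = exp (of_nat 7 * 1)" by simp
  also have "\<dots> = exp 1 ^ 7" by (rule exp_of_nat_mult)
  also have "\<dots> \<le> (272/100) ^ 7" using e_less_272 by (intro power_mono) auto
  also have "\<dots> \<le> 34 ^ 2" by (simp add: power_divide)
  finally have "exp (7/2::real) \<le> 34"
    by (rule power2_le_imp_le) auto
  with a show ?thesis by linarith
qed

theorem lemmaC11:
  fixes f :: "nat \<Rightarrow> 'a::euclidean_space \<Rightarrow> real"
    and F :: "'a \<Rightarrow> real" and gradF :: "'a \<Rightarrow> 'a"
    and N T :: nat and \<beta> \<eta> :: real
    and xs :: "nat \<Rightarrow> 'a" and xc g :: "nat \<Rightarrow> nat \<Rightarrow> nat \<Rightarrow> 'a"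
  assumes "N \<ge> 1"
    and "\<And>x. F x = (1 / real N) * (\<Sum>i<N. f i x)"
    and "\<beta> > 0" and "smooth_with_grad \<beta> F gradF"
    and "T \<ge> 2"
    and "\<eta> > 0" and "\<eta> \<le> 1 / (\<beta> * real T)"
    and "local_framework N T \<eta> xs xc g"
    and "r \<ge> 1" and "1 \<le> t" and "t \<le> T" and "i < N"
  shows "(norm (xc i (r + 1) t - xs r))\<^sup>2
     \<le> 2 * \<eta>\<^sup>2 * real T *
         (\<Sum>\<tau>=1..t. ((real T + 1)\<^sup>2 / (real T * (real T - 1))) ^ (t - \<tau>)
              * (norm (g i (r + 1) (\<tau> - 1) - gradF (xc i (r + 1) (\<tau> - 1))))\<^sup>2)
       + 22 * \<eta>\<^sup>2 * (real T)\<^sup>2 * (norm (gradF (xs r)))\<^sup>2"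
proof -
  let ?x = "\<lambda>k. xc i (r + 1) k"
  define S where "S = (real T + 1)\<^sup>2 / (real T * (real T - 1))"
  define Xi where "Xi = (\<lambda>\<tau>. (norm (g i (r + 1) (\<tau> - 1) - gradF (xc i (r + 1) (\<tau> - 1))))\<^sup>2)"
  define P where "P = (\<lambda>k. \<Sum>\<tau>=1..k. S ^ (k - \<tau>) * Xi \<tau>)"
  define Q where "Q = (\<lambda>k::nat. (S ^ k - 1) / (S - 1))"
  define \<gamma> where "\<gamma> = norm (gradF (xs r))"
  have T2: "real T \<ge> 2" using assms(5) by simp
  have Sgt: "S > 1" unfolding S_def using T2 by (simp add: field_simps power2_eq_square)
  have fw: "local_framework N T \<eta> xs xc g" by fact
  have x0: "?x 0 = xs r" using fw assms(12) unfolding local_framework_def by auto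
  have xstep: "?x k = ?x (k - 1) - \<eta> *\<^sub>R g i (r + 1) (k - 1)" if "1 \<le> k" "k \<le> T" for k
    using fw assms(12) that unfolding local_framework_def by auto
  have lip: "norm (gradF x - gradF y) \<le> \<beta> * norm (x - y)" for x y
    using assms(4) unfolding smooth_with_grad_def by auto
  have eb: "\<eta> * \<beta> \<le> 1 / real T"
  proof -
    have "\<eta> * \<beta> \<le> 1 / (\<beta> * real T) * \<beta>" using assms(3,7) by (intro mult_right_mono) auto
    also have "\<dots> = 1 / real T" using assms(3) by simp
    finally show ?thesis .
  qed
  have main: "(norm (?x k - xs r))\<^sup>2 \<le> 2 * \<eta>\<^sup>2 * real T * P k + 2 * \<eta>\<^sup>2 * real T * \<gamma>\<^sup>2 * Q k"
    if "k \<le> T" for k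
    using that
  proof (induction k)
    case 0
    then show ?case using x0 by (simp add: P_def Q_def)
  next
    case (Suc k)
    then have IH: "(norm (?x k - xs r))\<^sup>2 \<le> 2 * \<eta>\<^sup>2 * real T * P k + 2 * \<eta>\<^sup>2 * real T * \<gamma>\<^sup>2 * Q k"
      by simp
    define e where "e = g i (r + 1) k - gradF (?x k)"
    have dS: "?x (Suc k) - xs r = (?x k - xs r) - \<eta> *\<^sub>R (gradF (?x k) - gradF (xs r)) - \<eta> *\<^sub>R (e + gradF (xs r))"
    proof -
      have xs1: "?x (Suc k) = ?x k - \<eta> *\<^sub>R g i (r + 1) k"
        using xstep[of "Suc k"] Suc.prems by simp
      show ?thesis unfolding xs1 e_def by (simp add: scaleR_diff_right scaleR_add_right)
    qed
    have "norm (?x (Suc k) - xs r) \<le> norm (?x k - xs r) + norm (\<eta> *\<^sub>R (gradF (?x k) - gradF (xs r))) + norm (\<eta> *\<^sub>R (e + gradF (xs r)))"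
    proof -
      have "norm ((?x k - xs r) - \<eta> *\<^sub>R (gradF (?x k) - gradF (xs r)) - \<eta> *\<^sub>R (e + gradF (xs r)))
        \<le> norm ((?x k - xs r) - \<eta> *\<^sub>R (gradF (?x k) - gradF (xs r))) + norm (\<eta> *\<^sub>R (e + gradF (xs r)))"
        by (rule norm_triangle_ineq4)
      moreover have "norm ((?x k - xs r) - \<eta> *\<^sub>R (gradF (?x k) - gradF (xs r)))
        \<le> norm (?x k - xs r) + norm (\<eta> *\<^sub>R (gradF (?x k) - gradF (xs r)))"
        by (rule norm_triangle_ineq4)
      ultimately show ?thesis unfolding dS by linarith
    qed
    also have "norm (\<eta> *\<^sub>R (gradF (?x k) - gradF (xs r))) \<le> \<eta> * (\<beta> * norm (?x k - xs r))"
      using assms(6) lip[of "?x k" "xs r"] by (simp add: mult_left_mono)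
    also have "\<eta> * (\<beta> * norm (?x k - xs r)) \<le> (1 / real T) * norm (?x k - xs r)"
      using mult_right_mono[OF eb norm_ge_zero[of "?x k - xs r"]] by (simp add: mult.assoc)
    also have "norm (\<eta> *\<^sub>R (e + gradF (xs r))) \<le> \<eta> * (norm e + \<gamma>)"
      using assms(6) unfolding \<gamma>_def by (simp add: mult_left_mono norm_triangle_ineq)
    finally have nb: "norm (?x (Suc k) - xs r) \<le> (1 + 1 / real T) * norm (?x k - xs r) + \<eta> * (norm e + \<gamma>)"
      by (simp add: algebra_simps)
    have "(norm (?x (Suc k) - xs r))\<^sup>2 \<le> S * (norm (?x k - xs r))\<^sup>2 + 2 * real T * \<eta>\<^sup>2 * ((norm e)\<^sup>2 + \<gamma>\<^sup>2)"
      unfolding S_def using step_bound[OF T2 _ _ nb] by simp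
    also have "(norm e)\<^sup>2 = Xi (Suc k)" unfolding Xi_def e_def by simp
    also have "S * (norm (?x k - xs r))\<^sup>2 \<le> S * (2 * \<eta>\<^sup>2 * real T * P k + 2 * \<eta>\<^sup>2 * real T * \<gamma>\<^sup>2 * Q k)"
      using IH Sgt by (intro mult_left_mono) auto
    also have "P (Suc k) = S * P k + Xi (Suc k)"
    proof -
      have "P (Suc k) = (\<Sum>\<tau>=1..k. S ^ (Suc k - \<tau>) * Xi \<tau>) + Xi (Suc k)"
        unfolding P_def by simp
      also have "(\<Sum>\<tau>=1..k. S ^ (Suc k - \<tau>) * Xi \<tau>) = (\<Sum>\<tau>=1..k. S * (S ^ (k - \<tau>) * Xi \<tau>))"
        by (intro sum.cong) (auto simp: Suc_diff_le)
      finally show ?thesis unfolding P_def by (simp add: sum_distrib_left)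
    qed
    moreover have "Q (Suc k) = S * Q k + 1"
      unfolding Q_def using Sgt by (simp add: field_simps)
    ultimately show ?case by (simp add: algebra_simps)
  qed
  have Qt: "Q t \<le> 11 * real T"
  proof -
    have "S ^ t \<le> S ^ T" using Sgt assms(11) by (intro power_increasing) auto
    also have "S ^ T \<le> 34" unfolding S_def using ST_bound[OF assms(5)] .
    also have "34 \<le> 1 + 11 * real T * (S - 1)"
    proof -
      have "11 * real T * (S - 1) = 11 * (3 * real T + 1) / (real T - 1)"
        unfolding S_def using T2 by (simp add: field_simps power2_eq_square)
      also have "\<dots> \<ge> 33" using T2 by (simp add: field_simps)
      finally show ?thesis by simp
    qed
    finally have "S ^ t - 1 \<le> 11 * real T * (S - 1)" by simp
    then show ?thesis unfolding Q_def using Sgt by (simp add: divide_le_eq)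
  qed
  have m1: "(norm (?x t - xs r))\<^sup>2 \<le> 2 * \<eta>\<^sup>2 * real T * P t + 2 * \<eta>\<^sup>2 * real T * \<gamma>\<^sup>2 * Q t"
    using main assms(11) by simp
  have m2: "2 * \<eta>\<^sup>2 * real T * \<gamma>\<^sup>2 * Q t \<le> 2 * \<eta>\<^sup>2 * real T * \<gamma>\<^sup>2 * (11 * real T)"
    using Qt by (intro mult_left_mono) auto
  have "(norm (?x t - xs r))\<^sup>2 \<le> 2 * \<eta>\<^sup>2 * real T * P t + 2 * \<eta>\<^sup>2 * real T * \<gamma>\<^sup>2 * (11 * real T)"
    using m1 m2 by linarith
  moreover have "2 * \<eta>\<^sup>2 * real T * \<gamma>\<^sup>2 * (11 * real T) = 22 * \<eta>\<^sup>2 * (real T)\<^sup>2 * (norm (gradF (xs r)))\<^sup>2"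
    unfolding \<gamma>_def by (simp add: power2_eq_square)
  moreover have "P t = (\<Sum>\<tau>=1..t. ((real T + 1)\<^sup>2 / (real T * (real T - 1))) ^ (t - \<tau>)
              * (norm (g i (r + 1) (\<tau> - 1) - gradF (xc i (r + 1) (\<tau> - 1))))\<^sup>2)"
    unfolding P_def S_def Xi_def by simp
  ultimately show ?thesis by simp
qed

end
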